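(* Let $n\ge2$ and consider the sequential distributive $n$-site phosphorylation system with positive rate constants $k_{\mathrm{on}_i},k_{\mathrm{off}_i},k_{\mathrm{cat}_i},\ell_{\mathrm{on}_i},\ell_{\mathrm{off}_i},\ell_{\mathrm{cat}_i}$ ($i=0,\dots,n-1$) and positive total amounts $S_{tot},E_{tot},F_{tot}$. Assume \[ S_{tot}>F_{tot}. \] Then there is a choice of rate constants for which the system is multistationary. More explicitly, for any choice of positive $k_{\mathrm{cat}_1},\ell_{\mathrm{cat}_1}$ satisfying \[ \frac{k_{\mathrm{cat}_1}}{\ell_{\mathrm{cat}_1}}>\max\left\{\frac{F_{tot}}{S_{tot}-F_{tot}},\frac{F_{tot}}{E_{tot}}\right\}, \] fix any values of the remaining rate constants and positive numbers $h_4,\dots,h_{2n+3}$ such that $i\,h_{n+5}<h_{i+3}$ for $i=1,\dots,n$ and $(i-1)\,h_{n+5}<h_{n+i+3}$ for $i\in\{1,3,4,\dots,n\}$. Then there exists $t_0>0$ such that for any $t\in(0,t_0)$ the system (with the same $S_{tot},E_{tot},F_{tot}$) is multistationary after the rescalings \[ k_{\mathrm{on}_0}\mapsto t^{h_{n+4}}k_{\mathrm{on}_0},\quad k_{\mathrm{on}_i}\mapsto t^{h_{n+4+i}-h_{i+3}}k_{\mathrm{on}_i}\ (i=1,\dots,n-1),\quad \ell_{\mathrm{on}_i}\mapsto t^{h_{n+4+i}-h_{i+4}}\ell_{\mathrm{on}_i}\ (i=0,\dots,n-1). \] Similarly, for any fixed choice of rate constants and total conservation constants satisfying the two displayed inequalities,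 there exist positive constants $M_1,\dots,M_{4n-2}$ such that for any positive $\gamma_1,\dots,\gamma_{2n}$ verifying \[ \gamma_i<M_i\ (i=1,\dots,2n),\qquad \frac{\gamma_i}{\gamma_{n+2}^{\,i}}<M_{2n+i}\ (i=1,\dots,n),\qquad \frac{\gamma_{n+i}}{\gamma_{n+2}^{\,i-1}}<M_{3n-2+i}\ (i=3,\dots,n), \] the rescaling \[ k_{\mathrm{on}_0}\mapsto\gamma_{n+1}k_{\mathrm{on}_0},\quad k_{\mathrm{on}_i}\mapsto\frac{\gamma_{n+1+i}}{\gamma_i}k_{\mathrm{on}_i}\ (i=1,\dots,n-1),\quad \ell_{\mathrm{on}_i}\mapsto\frac{\gamma_{n+1+i}}{\gamma_{i+1}}\ell_{\mathrm{on}_i}\ (i=0,\dots,n-1) \] (all other constants unchanged) gives rise to a multistationary system.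
   Context: The sequential distributive $n$-site phosphorylation network has species $S_0,\dots,S_n$ (substrate with $i$ phosphate groups), kinase $E$, phosphatase $F$, and intermediates $ES_0,\dots,ES_{n-1}$, $FS_1,\dots,FS_n$, with reactions $S_i+E\rightleftarrows ES_i$ (forward $k_{\mathrm{on}_i}$, backward $k_{\mathrm{off}_i}$), $ES_i\to S_{i+1}+E$ ($k_{\mathrm{cat}_i}$), $S_{i+1}+F\rightleftarrows FS_{i+1}$ (forward $\ell_{\mathrm{on}_i}$, backward $\ell_{\mathrm{off}_i}$), $FS_{i+1}\to S_i+F$ ($\ell_{\mathrm{cat}_i}$), $i=0,\dots,n-1$. With concentrations $s_0,\dots,s_n,e,f$, $y_i$ of $ES_i$ and $u_i$ of $FS_{i+1}$, the mass-action system is \[ \begin{aligned} \dot s_0&=-k_{\mathrm{on}_0}s_0e+k_{\mathrm{off}_0}y_0+\ell_{\mathrm{cat}_0}u_0,\\ \dot s_i&=k_{\mathrm{cat}_{i-1}}y_{i-1}-k_{\mathrm{on}_i}s_ie+k_{\mathrm{off}_i}y_i+\ell_{\mathrm{cat}_i}u_i-\ell_{\mathrm{on}_{i-1}}s_if+\ell_{\mathrm{off}_{i-1}}u_{i-1},\quad 1\le i\le n-1,\\ \dot s_n&=k_{\mathrm{cat}_{n-1}}y_{n-1}-\ell_{\mathrm{on}_{n-1}}s_nf+\ell_{\mathrm{off}_{n-1}}u_{n-1},\\ \dot y_i&=k_{\mathrm{on}_i}s_ie-(k_{\mathrm{off}_i}+k_{\mathrm{cat}_i})y_i,\quad \dot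 u_i=\ell_{\mathrm{on}_i}s_{i+1}f-(\ell_{\mathrm{off}_i}+\ell_{\mathrm{cat}_i})u_i,\quad 0\le i\le n-1,\\ \dot e&=-\textstyle\sum_i\dot y_i,\qquad \dot f=-\sum_i\dot u_i, \end{aligned} \] with conservation laws $\sum_{i=0}^ns_i+\sum_{i=0}^{n-1}y_i+\sum_{i=0}^{n-1}u_i=S_{tot}$, $e+\sum_iy_i=E_{tot}$, $f+\sum_iu_i=F_{tot}$. The system is multistationary (for given rate constants and totals) if there are at least two positive points (all concentrations $>0$) at which all right-hand sides vanish and the three conservation laws hold with the given $S_{tot},E_{tot},F_{tot}$. *)

theory Defs
  imports Complex_Main
begin

record rates =
  kon  :: "nat \<Rightarrow> real"
  koff :: "nat \<Rightarrow> real"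
  kcat :: "nat \<Rightarrow> real"
  lon  :: "nat \<Rightarrow> real"
  loff :: "nat \<Rightarrow> real"
  lcat :: "nat \<Rightarrow> real"

definition pos_rates :: "nat \<Rightarrow> rates \<Rightarrow> bool" where
  "pos_rates n r \<longleftrightarrow> (\<forall>i<n. 0 < kon r i \<and> 0 < koff r i \<and> 0 < kcat r i
                            \<and> 0 < lon r i \<and> 0 < loff r i \<and> 0 < lcat r i)"

text \<open>Concentrations: s i (i = 0..n), y i = [ES_i], u i = [FS_(i+1)] (i = 0..n-1), e, f.
  All right-hand sides of the mass-action system vanish.\<close>
definition is_steady ::
  "nat \<Rightarrow> rates \<Rightarrow> (nat \<Rightarrow> real) \<Rightarrow> (nat \<Rightarrow> real) \<Rightarrow> (nat \<Rightarrow> real) \<Rightarrow> real \<Rightarrow> real \<Rightarrow> bool" where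
  "is_steady n r s y u e f \<longleftrightarrow>
     (- kon r 0 * s 0 * e + koff r 0 * y 0 + lcat r 0 * u 0 = 0) \<and>
     (\<forall>i. 1 \<le> i \<and> i \<le> n - 1 \<longrightarrow>
        kcat r (i - 1) * y (i - 1) - kon r i * s i * e + koff r i * y i + lcat r i * u i
        - lon r (i - 1) * s i * f + loff r (i - 1) * u (i - 1) = 0) \<and>
     (kcat r (n - 1) * y (n - 1) - lon r (n - 1) * s n * f + loff r (n - 1) * u (n - 1) = 0) \<and>
     (\<forall>i<n. kon r i * s i * e - (koff r i + kcat r i) * y i = 0) \<and>
     (\<forall>i<n. lon r i * s (Suc i) * f - (loff r i + lcat r i) * u i = 0) \<and>
     (- (\<Sum>i<n. kon r i * s i * e - (koff r i + kcat r i) * y i) = 0) \<and>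
     (- (\<Sum>i<n. lon r i * s (Suc i) * f - (loff r i + lcat r i) * u i) = 0)"

definition conserved ::
  "nat \<Rightarrow> real \<Rightarrow> real \<Rightarrow> real \<Rightarrow> (nat \<Rightarrow> real) \<Rightarrow> (nat \<Rightarrow> real) \<Rightarrow> (nat \<Rightarrow> real) \<Rightarrow> real \<Rightarrow> real \<Rightarrow> bool" where
  "conserved n Stot Etot Ftot s y u e f \<longleftrightarrow>
     (\<Sum>i\<le>n. s i) + (\<Sum>i<n. y i) + (\<Sum>i<n. u i) = Stot \<and>
     e + (\<Sum>i<n. y i) = Etot \<and>
     f + (\<Sum>i<n. u i) = Ftot"

definition positive_point ::
  "nat \<Rightarrow> (nat \<Rightarrow> real) \<Rightarrow> (nat \<Rightarrow> real) \<Rightarrow> (nat \<Rightarrow> real) \<Rightarrow> real \<Rightarrow> real \<Rightarrow> bool" where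
  "positive_point n s y u e f \<longleftrightarrow>
     (\<forall>i\<le>n. 0 < s i) \<and> (\<forall>i<n. 0 < y i \<and> 0 < u i) \<and> 0 < e \<and> 0 < f"

definition multistationary :: "nat \<Rightarrow> rates \<Rightarrow> real \<Rightarrow> real \<Rightarrow> real \<Rightarrow> bool" where
  "multistationary n r Stot Etot Ftot \<longleftrightarrow>
     (\<exists>s1 y1 u1 e1 f1 s2 y2 u2 e2 f2.
        positive_point n s1 y1 u1 e1 f1 \<and> is_steady n r s1 y1 u1 e1 f1 \<and>
        conserved n Stot Etot Ftot s1 y1 u1 e1 f1 \<and>
        positive_point n s2 y2 u2 e2 f2 \<and> is_steady n r s2 y2 u2 e2 f2 \<and>
        conserved n Stot Etot Ftot s2 y2 u2 e2 f2 \<and>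
        ((\<exists>i\<le>n. s1 i \<noteq> s2 i) \<or> (\<exists>i<n. y1 i \<noteq> y2 i \<or> u1 i \<noteq> u2 i) \<or> e1 \<noteq> e2 \<or> f1 \<noteq> f2))"

end

theory Submission
  imports Defs
begin


lemma two_roots:
  fixes A B P :: "real \<Rightarrow> real" and Stot Etot Ftot z1 z2 :: real
  fixes N D X F g :: "real \<Rightarrow> real"
  assumes N_def: "N = (\<lambda>z. Ftot*z - Etot)"
    and D_def: "D = (\<lambda>z. Etot * B z - Ftot * z * A z)"
    and X_def: "X = (\<lambda>z. N z / D z)"
    and F_def: "F = (\<lambda>z. Ftot / (1 + X z * B z))"
    and g_def: "g = (\<lambda>z. X z * P z - z * F z - F z + Etot + Ftot - Stot)"
    and cA: "continuous_on UNIV A" and cB: "continuous_on UNIV B" and cP: "continuous_on UNIV P"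
    and pos: "\<And>z. z > 0 \<Longrightarrow> A z > 0 \<and> B z > 0 \<and> P z > 0"
    and tot: "0 < Stot" "0 < Etot" "0 < Ftot"
    and z12: "0 < z1" "z1 < z2" and Nz1: "N z1 > 0"
    and Dpos: "\<And>z. z1 \<le> z \<Longrightarrow> z \<le> z2 \<Longrightarrow> D z > 0"
    and g1: "g z1 > 0" and g2: "g z2 < 0"
    and grow: "\<exists>z'>z2. Stot * D z' < N z' * P z'"
  shows "\<exists>za zb. za \<noteq> zb \<and> za > 0 \<and> zb > 0 \<and> N za > 0 \<and> N zb > 0 \<and> D za > 0 \<and> D zb > 0
          \<and> g za = 0 \<and> g zb = 0"
proof -
  have Nmono: "N z > 0" if "z \<ge> z1" for z
  proof -
    have "N z \<ge> N z1" using that tot unfolding N_def by (simp add: mult_left_mono)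
    thus ?thesis using Nz1 by simp
  qed
  have cN: "continuous_on UNIV N" unfolding N_def by (intro continuous_intros)
  have cD: "continuous_on UNIV D" unfolding D_def by (intro continuous_intros cA cB)
  have cg: "continuous_on {a..b} g" if "z1 \<le> a" "\<And>z. a \<le> z \<Longrightarrow> z \<le> b \<Longrightarrow> D z > 0" for a b
  proof -
    have sub: "continuous_on {a..b} h" if "continuous_on UNIV h" for h :: "real \<Rightarrow> real"
      using continuous_on_subset[OF that] by blast
    have Dne: "\<forall>z\<in>{a..b}. D z \<noteq> 0" using that(2) by force
    have Xpos: "\<forall>z\<in>{a..b}. X z > 0"
    proof
      fix z assume z: "z \<in> {a..b}"
      have "N z > 0" using z that(1) Nmono by auto
      moreover have "D z > 0" using z that(2) by auto
      ultimately show "X z > 0" unfolding X_def by simp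
    qed
    have cX: "continuous_on {a..b} X" unfolding X_def
      by (intro continuous_on_divide sub cN cD Dne)
    have ne: "\<forall>z\<in>{a..b}. 1 + X z * B z \<noteq> 0"
    proof
      fix z assume z: "z \<in> {a..b}"
      have "z > 0" using z that(1) z12 by auto
      hence "B z > 0" using pos by blast
      thus "1 + X z * B z \<noteq> 0" using Xpos z
        by (metis add_pos_pos mult_pos_pos zero_less_one less_irrefl)
    qed
    have cF: "continuous_on {a..b} F" unfolding F_def
      by (intro continuous_on_divide continuous_intros cX sub cB ne)
    show ?thesis unfolding g_def
      by (intro continuous_intros cX cF sub cP)
  qed
  have ident: "z * F z = Etot / (1 + X z * A z) \<and> F z < Ftot \<and> z * F z < Etot \<and> F z > 0"
    if "z \<ge> z1" "D z > 0" for z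
  proof -
    have z0: "z > 0" using that z12 by auto
    have Ap: "A z > 0" and Bp: "B z > 0" using pos z0 by auto
    have Xp: "X z > 0" unfolding X_def using Nmono that by simp
    have XD: "X z * D z = N z" unfolding X_def using that by simp
    have e1: "Etot * (1 + X z * B z) = Ftot * z * (1 + X z * A z)"
      using XD unfolding D_def N_def by (simp add: algebra_simps)
    have p1: "1 + X z * B z > 0" "1 + X z * A z > 0" using Xp Ap Bp by (simp_all add: add_pos_pos)
    have "z * F z = Etot / (1 + X z * A z)"
      unfolding F_def using p1 e1 by (simp add: field_simps)
    moreover have "F z < Ftot" unfolding F_def using p1 tot Xp Bp
      by (simp add: field_simps)
    moreover have "Etot / (1 + X z * A z) < Etot" using p1 tot Xp Ap
      by (simp add: field_simps)
    moreover have "F z > 0" unfolding F_def using p1 tot by simp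
    ultimately show ?thesis by simp
  qed
  define h where "h = (\<lambda>z. Stot * D z - N z * P z)"
  have ch: "continuous_on UNIV h" unfolding h_def by (intro continuous_intros cD cN cP)
  obtain z' where z': "z' > z2" "h z' < 0" using grow unfolding h_def by auto
  have h2: "h z2 > 0"
  proof -
    have Dz: "D z2 > 0" using Dpos z12 by auto
    have i: "z2 * F z2 < Etot" "F z2 < Ftot" using ident[of z2] Dz z12 by auto
    have "X z2 * P z2 < Stot" using g2 i unfolding g_def by linarith
    hence "N z2 / D z2 * P z2 < Stot" unfolding X_def .
    hence "N z2 * P z2 < Stot * D z2" using Dz by (simp add: field_simps)
    thus ?thesis unfolding h_def by simp
  qed
  define S where "S = {z2..z'} \<inter> {z. h z \<le> 0}"
  have cS: "compact S" unfolding S_def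
    by (intro compact_Int_closed compact_Icc closed_Collect_le ch continuous_on_const)
  have "z' \<in> S" using z' unfolding S_def by auto
  hence neS: "S \<noteq> {}" by blast
  obtain zh where zh: "zh \<in> S" "\<And>y. y \<in> S \<Longrightarrow> zh \<le> y"
    using compact_attains_inf[OF cS neS] by blast
  have zh2: "zh > z2" using zh(1) h2 unfolding S_def by (cases "zh = z2") auto
  have hpos: "h z > 0" if "z2 \<le> z" "z < zh" for z
  proof (rule ccontr)
    assume "\<not> h z > 0"
    hence "z \<in> S" using that zh(1) unfolding S_def by auto
    thus False using zh(2) that by fastforce
  qed
  have hzh: "h zh = 0"
  proof (rule ccontr)
    assume "h zh \<noteq> 0"
    hence neg: "h zh < 0" using zh(1) unfolding S_def by auto
    have "\<exists>x. z2 \<le> x \<and> x \<le> zh \<and> h x = 0"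
      by (rule IVT2') (use neg h2 zh2 continuous_on_subset[OF ch] in auto)
    then obtain x where "z2 \<le> x" "x \<le> zh" "h x = 0" by auto
    thus False using hpos[of x] neg by (cases "x = zh") auto
  qed
  have Dpos2: "D z > 0" if "z2 \<le> z" "z \<le> zh" for z
  proof -
    have "N z > 0" using Nmono that z12 by auto
    moreover have "P z > 0" using pos that z12 by auto
    moreover have "h z \<ge> 0" using hpos[of z] hzh that by (cases "z = zh") auto
    ultimately have "Stot * D z > 0" unfolding h_def by (smt (verit) mult_pos_pos)
    thus ?thesis using tot by (simp add: zero_less_mult_iff)
  qed
  have gzh: "g zh > 0"
  proof -
    have Dz: "D zh > 0" using Dpos2 zh2 by auto
    have "N zh * P zh = Stot * D zh" using hzh unfolding h_def by simp
    hence "X zh * P zh = Stot" unfolding X_def using Dz by (simp add: field_simps)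
    moreover have "zh * F zh < Etot" "F zh < Ftot" using ident[of zh] Dz zh2 z12 by auto
    ultimately show ?thesis unfolding g_def by simp
  qed
  obtain za where za: "z1 \<le> za" "za \<le> z2" "g za = 0"
    using IVT2'[of g z2 0 z1] g1 g2 z12 cg[of z1 z2] Dpos by force
  obtain zb where zb: "z2 \<le> zb" "zb \<le> zh" "g zb = 0"
    using IVT'[of g z2 0 zh] gzh g2 zh2 cg[of z2 zh] Dpos2 z12 by force
  have "za \<noteq> z2" "zb \<noteq> z2" using za zb g2 by auto
  hence "za < zb" using za zb by auto
  moreover have "D za > 0" using Dpos za by auto
  moreover have "D zb > 0" using Dpos2 zb by auto
  ultimately show ?thesis using za zb z12 Nmono
    by (intro exI[of _ za] exI[of _ zb]) auto
qed



lemma steady_from_rel: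
  assumes n: "1 \<le> n"
    and r1: "\<And>i. i < n \<Longrightarrow> kon r i * s i * e = (koff r i + kcat r i) * y i"
    and r2: "\<And>i. i < n \<Longrightarrow> lon r i * s (Suc i) * f = (loff r i + lcat r i) * u i"
    and r3: "\<And>i. i < n \<Longrightarrow> kcat r i * y i = lcat r i * u i"
  shows "is_steady n r s y u e f"
proof -
  have a: "- kon r 0 * s 0 * e + koff r 0 * y 0 + lcat r 0 * u 0 = 0"
    using r1[of 0] r3[of 0] n by (simp add: algebra_simps)
  have b: "kcat r (i - 1) * y (i - 1) - kon r i * s i * e + koff r i * y i + lcat r i * u i
        - lon r (i - 1) * s i * f + loff r (i - 1) * u (i - 1) = 0" if "1 \<le> i" "i \<le> n - 1" for i
  proof -
    have i: "i < n" "i - 1 < n" "Suc (i - 1) = i" using that n by auto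
    show ?thesis using r1[OF i(1)] r3[OF i(1)] r2[OF i(2)] r3[OF i(2)] i(3)
      by (simp add: algebra_simps)
  qed
  have c: "kcat r (n - 1) * y (n - 1) - lon r (n - 1) * s n * f + loff r (n - 1) * u (n - 1) = 0"
  proof -
    have i: "n - 1 < n" "Suc (n - 1) = n" using n by auto
    show ?thesis using r2[OF i(1)] r3[OF i(1)] i(2) by (simp add: algebra_simps)
  qed
  have d: "\<forall>i<n. kon r i * s i * e - (koff r i + kcat r i) * y i = 0" using r1 by simp
  have e: "\<forall>i<n. lon r i * s (Suc i) * f - (loff r i + lcat r i) * u i = 0" using r2 by simp
  have s1: "(\<Sum>i<n. kon r i * s i * e - (koff r i + kcat r i) * y i) = 0" using d by simp
  have s2: "(\<Sum>i<n. lon r i * s (Suc i) * f - (loff r i + lcat r i) * u i) = 0" using e by simp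
  have b': "\<forall>i. 1 \<le> i \<and> i \<le> n - 1 \<longrightarrow>
        kcat r (i - 1) * y (i - 1) - kon r i * s i * e + koff r i * y i + lcat r i * u i
        - lon r (i - 1) * s i * f + loff r (i - 1) * u (i - 1) = 0" using b by blast
  show ?thesis unfolding is_steady_def using a c d e s1 s2 b' by (intro conjI) simp_all
qed

definition KK :: "rates \<Rightarrow> nat \<Rightarrow> real" where "KK r i = kon r i / (koff r i + kcat r i)"
definition LL :: "rates \<Rightarrow> nat \<Rightarrow> real" where "LL r i = lon r i / (loff r i + lcat r i)"
definition tau :: "rates \<Rightarrow> nat \<Rightarrow> real" where "tau r i = kcat r i * KK r i / (lcat r i * LL r i)"
definition TT :: "rates \<Rightarrow> nat \<Rightarrow> real" where "TT r i = (\<Prod>j<i. tau r j)"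
definition aa :: "(nat \<Rightarrow> real) \<Rightarrow> nat \<Rightarrow> real" where "aa \<gamma> i = (if i = 0 then 1 else \<gamma> i)"
definition resc :: "nat \<Rightarrow> rates \<Rightarrow> (nat \<Rightarrow> real) \<Rightarrow> rates" where
  "resc n r \<gamma> = r\<lparr>kon := (\<lambda>i. if i = 0 then \<gamma> (n+1) * kon r 0
                                     else \<gamma> (n+1+i) / \<gamma> i * kon r i),
                        lon := (\<lambda>i. \<gamma> (n+1+i) / \<gamma> (i+1) * lon r i)\<rparr>"
definition Afun :: "nat \<Rightarrow> rates \<Rightarrow> (nat \<Rightarrow> real) \<Rightarrow> real \<Rightarrow> real" where
  "Afun n r \<gamma> z = (\<Sum>i<n. \<gamma> (n+1+i) * KK r i * TT r i * z^i)"
definition Bfun :: "nat \<Rightarrow> rates \<Rightarrow> (nat \<Rightarrow> real) \<Rightarrow> real \<Rightarrow> real" where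
  "Bfun n r \<gamma> z = (\<Sum>i<n. \<gamma> (n+1+i) * LL r i * TT r (Suc i) * z^(Suc i))"
definition Pfun :: "nat \<Rightarrow> rates \<Rightarrow> (nat \<Rightarrow> real) \<Rightarrow> real \<Rightarrow> real" where
  "Pfun n r \<gamma> z = (\<Sum>i\<le>n. aa \<gamma> i * TT r i * z^i)"

lemma KK_pos: "pos_rates n r \<Longrightarrow> i < n \<Longrightarrow> KK r i > 0"
  unfolding pos_rates_def KK_def by (simp add: add_pos_pos)
lemma LL_pos: "pos_rates n r \<Longrightarrow> i < n \<Longrightarrow> LL r i > 0"
  unfolding pos_rates_def LL_def by (simp add: add_pos_pos)
lemma tau_pos: "pos_rates n r \<Longrightarrow> i < n \<Longrightarrow> tau r i > 0"
  unfolding tau_def using KK_pos LL_pos unfolding pos_rates_def by simp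
lemma TT_pos: "pos_rates n r \<Longrightarrow> i \<le> n \<Longrightarrow> TT r i > 0"
  unfolding TT_def using tau_pos by (intro prod_pos) auto
lemma TT_Suc: "TT r (Suc i) = TT r i * tau r i"
  unfolding TT_def by simp
lemma lcat_LL_tau: "pos_rates n r \<Longrightarrow> i < n \<Longrightarrow> lcat r i * LL r i * tau r i = kcat r i * KK r i"
  proof -
  assume a: "pos_rates n r" "i < n"
  have "LL r i > 0" "lcat r i > 0" using LL_pos[OF a] a unfolding pos_rates_def by auto
  thus ?thesis unfolding tau_def by (simp add: field_simps)
qed

lemma aa_pos: "\<forall>i\<in>{1..2*n}. 0 < \<gamma> i \<Longrightarrow> i \<le> n \<Longrightarrow> aa \<gamma> i > 0"
  unfolding aa_def by auto

lemma point_ok: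
  fixes s y u :: "nat \<Rightarrow> real" and e :: real
  assumes n: "1 \<le> n" and pr: "pos_rates n r" and gp: "\<forall>i\<in>{1..2*n}. 0 < \<gamma> i"
    and xfz: "x > 0" "f > 0" "z > 0"
    and e_def: "e = z * f"
    and s_def: "s = (\<lambda>i. x * aa \<gamma> i * TT r i * z^i)"
    and y_def: "y = (\<lambda>i. \<gamma> (n+1+i) * KK r i * TT r i * x * z^i * e)"
    and u_def: "u = (\<lambda>i. \<gamma> (n+1+i) * LL r i * TT r (Suc i) * x * z^(Suc i) * f)"
  shows "positive_point n s y u e f \<and> is_steady n (resc n r \<gamma>) s y u e f
    \<and> (\<Sum>i\<le>n. s i) = x * Pfun n r \<gamma> z \<and> (\<Sum>i<n. y i) = x * e * Afun n r \<gamma> z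
    \<and> (\<Sum>i<n. u i) = x * f * Bfun n r \<gamma> z"
proof -
  have bpos: "\<gamma> (n+1+i) > 0" if "i < n" for i using gp that by auto
  have pp: "positive_point n s y u e f"
    unfolding positive_point_def s_def y_def u_def e_def
    using xfz aa_pos[OF gp] TT_pos[OF pr] KK_pos[OF pr] LL_pos[OF pr] bpos
    by (auto intro!: mult_pos_pos)
  have st: "is_steady n (resc n r \<gamma>) s y u e f"
  proof (rule steady_from_rel[OF n])
    fix i assume i: "i < n"
    have ai: "aa \<gamma> i > 0" "aa \<gamma> (Suc i) > 0" using aa_pos[OF gp] i by auto
    have konr: "kon (resc n r \<gamma>) i = \<gamma> (n+1+i) / aa \<gamma> i * kon r i"
      unfolding resc_def aa_def by simp
    have lonr: "lon (resc n r \<gamma>) i = \<gamma> (n+1+i) / aa \<gamma> (Suc i) * lon r i"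
      unfolding resc_def aa_def by simp
    have kk: "(koff r i + kcat r i) * KK r i = kon r i" "(loff r i + lcat r i) * LL r i = lon r i"
      using pr i unfolding pos_rates_def KK_def LL_def by auto
    show "kon (resc n r \<gamma>) i * s i * e = (koff (resc n r \<gamma>) i + kcat (resc n r \<gamma>) i) * y i"
      unfolding konr s_def y_def using ai kk(1)[symmetric] by (simp add: resc_def field_simps)
    show "lon (resc n r \<gamma>) i * s (Suc i) * f = (loff (resc n r \<gamma>) i + lcat (resc n r \<gamma>) i) * u i"
      unfolding lonr s_def u_def using ai kk(2)[symmetric] by (simp add: resc_def field_simps)
    have lt: "lcat r i * LL r i * tau r i = kcat r i * KK r i" using lcat_LL_tau[OF pr i] .
    show "kcat (resc n r \<gamma>) i * y i = lcat (resc n r \<gamma>) i * u i"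
    proof -
      have "lcat r i * u i = \<gamma> (n+1+i) * (lcat r i * LL r i * tau r i) * TT r i * x * z^(Suc i) * f"
        unfolding u_def TT_Suc by (simp add: algebra_simps)
      also have "\<dots> = kcat r i * y i" unfolding lt y_def e_def by (simp add: algebra_simps)
      finally show ?thesis by (simp add: resc_def)
    qed
  qed
  have sS: "(\<Sum>i\<le>n. s i) = x * Pfun n r \<gamma> z"
    unfolding s_def Pfun_def sum_distrib_left by (simp add: algebra_simps)
  have sY: "(\<Sum>i<n. y i) = x * e * Afun n r \<gamma> z"
    unfolding y_def Afun_def sum_distrib_left by (simp add: algebra_simps)
  have sU: "(\<Sum>i<n. u i) = x * f * Bfun n r \<gamma> z"
    unfolding u_def Bfun_def sum_distrib_left by (simp add: algebra_simps)
  show ?thesis using pp st sS sY sU by simp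
qed



lemma root_point:
  fixes Stot Etot Ftot z :: real
  assumes n: "1 \<le> n" and pr: "pos_rates n r" and gp: "\<forall>i\<in>{1..2*n}. 0 < \<gamma> i"
    and tot: "0 < Stot" "0 < Etot" "0 < Ftot"
    and z: "z > 0"
    and N: "Ftot * z - Etot > 0"
    and D: "Etot * Bfun n r \<gamma> z - Ftot * z * Afun n r \<gamma> z > 0"
    and x_def: "x = (Ftot * z - Etot) / (Etot * Bfun n r \<gamma> z - Ftot * z * Afun n r \<gamma> z)"
    and f_def: "f = Ftot / (1 + x * Bfun n r \<gamma> z)"
    and g: "x * Pfun n r \<gamma> z - z * f - f + Etot + Ftot - Stot = 0"
  shows "\<exists>s y u. positive_point n s y u (z*f) f \<and> is_steady n (resc n r \<gamma>) s y u (z*f) f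
           \<and> conserved n Stot Etot Ftot s y u (z*f) f"
proof -
  define A where "A = Afun n r \<gamma> z"
  define B where "B = Bfun n r \<gamma> z"
  define P where "P = Pfun n r \<gamma> z"
  have bpos: "\<gamma> (n+1+i) > 0" if "i < n" for i using gp that by auto
  have Ap: "A > 0" unfolding A_def Afun_def
    using n z bpos KK_pos[OF pr] TT_pos[OF pr] by (intro sum_pos) (auto simp: lessThan_empty_iff)
  have Bp: "B > 0" unfolding B_def Bfun_def
    using n z bpos LL_pos[OF pr] TT_pos[OF pr] by (intro sum_pos) (auto simp: lessThan_empty_iff)
  have xp: "x > 0" using N D unfolding x_def by simp
  have xD: "x * (Etot * B - Ftot * z * A) = Ftot * z - Etot"
    unfolding x_def A_def B_def using D by simp
  have p1: "1 + x * B > 0" "1 + x * A > 0" using xp Ap Bp by (simp_all add: add_pos_pos)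
  have fp: "f > 0" unfolding f_def B_def[symmetric] using p1 tot by simp
  have fB: "f * (1 + x * B) = Ftot" unfolding f_def B_def[symmetric] using p1 by simp
  have eA: "z * f * (1 + x * A) = Etot"
  proof -
    have "Etot * (1 + x * B) = Ftot * z * (1 + x * A)" using xD by (simp add: algebra_simps)
    thus ?thesis unfolding f_def B_def[symmetric] using p1 by (simp add: field_simps)
  qed
  define e where "e = z * f"
  define s where "s = (\<lambda>i. x * aa \<gamma> i * TT r i * z^i)"
  define y where "y = (\<lambda>i. \<gamma> (n+1+i) * KK r i * TT r i * x * z^i * e)"
  define u where "u = (\<lambda>i. \<gamma> (n+1+i) * LL r i * TT r (Suc i) * x * z^(Suc i) * f)"
  have pt: "positive_point n s y u e f \<and> is_steady n (resc n r \<gamma>) s y u e f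
    \<and> (\<Sum>i\<le>n. s i) = x * P \<and> (\<Sum>i<n. y i) = x * e * A
    \<and> (\<Sum>i<n. u i) = x * f * B"
    unfolding A_def B_def P_def
    by (rule point_ok[OF n pr gp xp fp z e_def s_def y_def u_def])
  have c: "conserved n Stot Etot Ftot s y u e f"
    unfolding conserved_def using pt eA fB g unfolding e_def P_def[symmetric]
    by (simp add: algebra_simps)
  show ?thesis using pt c unfolding e_def by blast
qed

lemma ms_from_roots:
  fixes Stot Etot Ftot :: real
  fixes N D X F g :: "real \<Rightarrow> real"
  assumes n: "1 \<le> n" and pr: "pos_rates n r" and gp: "\<forall>i\<in>{1..2*n}. 0 < \<gamma> i"
    and tot: "0 < Stot" "0 < Etot" "0 < Ftot"
    and N_def: "N = (\<lambda>z. Ftot*z - Etot)"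
    and D_def: "D = (\<lambda>z. Etot * Bfun n r \<gamma> z - Ftot * z * Afun n r \<gamma> z)"
    and X_def: "X = (\<lambda>z. N z / D z)"
    and F_def: "F = (\<lambda>z. Ftot / (1 + X z * Bfun n r \<gamma> z))"
    and g_def: "g = (\<lambda>z. X z * Pfun n r \<gamma> z - z * F z - F z + Etot + Ftot - Stot)"
    and roots: "\<exists>za zb. za \<noteq> zb \<and> za > 0 \<and> zb > 0 \<and> N za > 0 \<and> N zb > 0 \<and> D za > 0 \<and> D zb > 0
          \<and> g za = 0 \<and> g zb = 0"
  shows "multistationary n (resc n r \<gamma>) Stot Etot Ftot"
proof -
  obtain za zb where zz: "za \<noteq> zb" "za > 0" "zb > 0" "N za > 0" "N zb > 0" "D za > 0" "D zb > 0"
    "g za = 0" "g zb = 0" using roots by blast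
  have one: "\<exists>s y u. positive_point n s y u (z * F z) (F z) \<and> is_steady n (resc n r \<gamma>) s y u (z * F z) (F z)
           \<and> conserved n Stot Etot Ftot s y u (z * F z) (F z)"
    if "z > 0" "N z > 0" "D z > 0" "g z = 0" for z
    by (rule root_point[OF n pr gp tot, of z "X z"])
       (use that in \<open>simp_all add: N_def D_def X_def F_def g_def\<close>)
  obtain s1 y1 u1 where p1: "positive_point n s1 y1 u1 (za * F za) (F za)"
    "is_steady n (resc n r \<gamma>) s1 y1 u1 (za * F za) (F za)"
    "conserved n Stot Etot Ftot s1 y1 u1 (za * F za) (F za)"
    using one[of za] zz by blast
  obtain s2 y2 u2 where p2: "positive_point n s2 y2 u2 (zb * F zb) (F zb)"
    "is_steady n (resc n r \<gamma>) s2 y2 u2 (zb * F zb) (F zb)"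
    "conserved n Stot Etot Ftot s2 y2 u2 (zb * F zb) (F zb)"
    using one[of zb] zz by blast
  have fp: "F za > 0" using p1(1) unfolding positive_point_def by simp
  have diff: "za * F za \<noteq> zb * F zb \<or> F za \<noteq> F zb"
  proof (rule ccontr)
    assume "\<not> ?thesis"
    hence h: "za * F za = zb * F zb" "F za = F zb" by auto
    hence "za * F za = zb * F za" by simp
    thus False using fp zz(1) by (simp add: mult_right_cancel)
  qed
  show ?thesis unfolding multistationary_def
    using p1 p2 diff by blast
qed



lemma sum_pert:
  fixes lam d :: "nat \<Rightarrow> real"
  assumes "finite I" "k \<in> I" "lam k = 1" "\<And>i. i \<in> I \<Longrightarrow> i \<noteq> k \<Longrightarrow> \<bar>lam i\<bar> \<le> \<delta>" "\<delta> \<ge> 0"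
  shows "\<bar>(\<Sum>i\<in>I. lam i * d i) - d k\<bar> \<le> \<delta> * (\<Sum>i\<in>I. \<bar>d i\<bar>)"
proof -
  have "(\<Sum>i\<in>I. lam i * d i) - d k = (\<Sum>i\<in>I. lam i * d i - (if i = k then d i else 0))"
    using assms(1,2) by (simp add: sum.distrib sum_subtractf)
  also have "\<bar>\<dots>\<bar> \<le> (\<Sum>i\<in>I. \<bar>lam i * d i - (if i = k then d i else 0)\<bar>)" by (rule sum_abs)
  also have "\<dots> \<le> (\<Sum>i\<in>I. \<delta> * \<bar>d i\<bar>)"
  proof (rule sum_mono)
    fix i assume i: "i \<in> I"
    show "\<bar>lam i * d i - (if i = k then d i else 0)\<bar> \<le> \<delta> * \<bar>d i\<bar>"
    proof (cases "i = k")
      case True thus ?thesis using assms(3,5) by simp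
    next
      case False
      hence "\<bar>lam i\<bar> * \<bar>d i\<bar> \<le> \<delta> * \<bar>d i\<bar>" using assms(4) i by (simp add: mult_right_mono)
      thus ?thesis using False by (simp add: abs_mult)
    qed
  qed
  finally show ?thesis by (simp add: sum_distrib_left)
qed

definition cc :: "rates \<Rightarrow> real \<Rightarrow> real \<Rightarrow> nat \<Rightarrow> real" where
  "cc r Etot Ftot i = TT r i * (Etot * LL r i * tau r i - Ftot * KK r i)"

lemma D_scaled:
  assumes "\<epsilon> > 0"
  shows "\<epsilon> * (Etot * Bfun n r \<gamma> (w/\<epsilon>) - Ftot * (w/\<epsilon>) * Afun n r \<gamma> (w/\<epsilon>))
     = (\<Sum>i<n. (\<gamma> (n+1+i) / \<epsilon>^i) * (cc r Etot Ftot i * w^(Suc i)))"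
proof -
  have "\<epsilon> * (Etot * Bfun n r \<gamma> (w/\<epsilon>) - Ftot * (w/\<epsilon>) * Afun n r \<gamma> (w/\<epsilon>))
     = (\<Sum>i<n. \<epsilon> * (Etot * (\<gamma> (n+1+i) * LL r i * TT r (Suc i) * (w/\<epsilon>)^(Suc i))
              - Ftot * (w/\<epsilon>) * (\<gamma> (n+1+i) * KK r i * TT r i * (w/\<epsilon>)^i)))"
    unfolding Bfun_def Afun_def sum_distrib_left sum_subtractf[symmetric] by simp
  also have "\<dots> = (\<Sum>i<n. (\<gamma> (n+1+i) / \<epsilon>^i) * (cc r Etot Ftot i * w^(Suc i)))"
    by (rule sum.cong) (use assms in \<open>simp_all add: cc_def TT_Suc power_divide field_simps\<close>)
  finally show ?thesis .
qed

lemma A_scaled: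
  assumes "\<epsilon> > 0"
  shows "\<epsilon> * (w/\<epsilon>) * Afun n r \<gamma> (w/\<epsilon>)
     = (\<Sum>i<n. (\<gamma> (n+1+i) / \<epsilon>^i) * (KK r i * TT r i * w^(Suc i)))"
  unfolding Afun_def sum_distrib_left
  by (rule sum.cong) (use assms in \<open>simp_all add: power_divide field_simps\<close>)

lemma P_scaled:
  assumes "\<epsilon> > 0"
  shows "Pfun n r \<gamma> (w/\<epsilon>) = (\<Sum>i\<le>n. (aa \<gamma> i / \<epsilon>^i) * (TT r i * w^i))"
  unfolding Pfun_def
  by (rule sum.cong) (use assms in \<open>simp_all add: power_divide field_simps\<close>)



lemma ident_alg:
  fixes Etot Ftot z X A B :: real
  assumes "X * (Etot * B - Ftot * z * A) = Ftot * z - Etot" "X > 0" "A > 0" "B > 0"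
  shows "z * (Ftot / (1 + X * B)) = Etot / (1 + X * A)"
proof -
  have p1: "1 + X * B > 0" "1 + X * A > 0" using assms by (simp_all add: add_pos_pos)
  have "Etot * (1 + X * B) = Ftot * z * (1 + X * A)" using assms(1) by (simp add: algebra_simps)
  thus ?thesis using p1 by (simp add: field_simps)
qed

lemma frac_bound:
  fixes q t0 \<eta> :: real
  assumes "0 \<le> q" "q \<le> t0 + \<eta>" "0 \<le> t0" "0 \<le> \<eta>"
  shows "q / (1 + q) \<le> t0 / (1 + t0) + \<eta>"
proof -
  have "q / (1 + q) - t0 / (1 + t0) = (q - t0) / ((1 + q) * (1 + t0))"
    using assms by (simp add: field_simps)
  also have "\<dots> \<le> \<eta>"
  proof (cases "q \<le> t0")
    case True
    hence "(q - t0) / ((1 + q) * (1 + t0)) \<le> 0" using assms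
      by (intro divide_nonpos_pos) auto
    thus ?thesis using assms by linarith
  next
    case False
    have one: "1 \<le> (1 + q) * (1 + t0)"
      using assms mult_nonneg_nonneg[of q t0] by (simp add: algebra_simps)
    have "(q - t0) / ((1 + q) * (1 + t0)) \<le> (q - t0) / 1"
      using False one by (intro divide_left_mono) auto
    thus ?thesis using assms by simp
  qed
  finally show ?thesis by simp
qed

lemma ABP_cont:
  "continuous_on UNIV (Afun n r \<gamma>)" "continuous_on UNIV (Bfun n r \<gamma>)" "continuous_on UNIV (Pfun n r \<gamma>)"
  unfolding Afun_def[abs_def] Bfun_def[abs_def] Pfun_def[abs_def]
  by (intro continuous_intros)+

lemma ABP_pos:
  assumes n: "1 \<le> n" and pr: "pos_rates n r" and gp: "\<forall>i\<in>{1..2*n}. 0 < \<gamma> i" and z: "z > 0"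
  shows "Afun n r \<gamma> z > 0" "Bfun n r \<gamma> z > 0" "Pfun n r \<gamma> z \<ge> 1"
proof -
  have bpos: "\<gamma> (n+1+i) > 0" if "i < n" for i using gp that by auto
  show "Afun n r \<gamma> z > 0" unfolding Afun_def
    using n z bpos KK_pos[OF pr] TT_pos[OF pr] by (intro sum_pos) (auto simp: lessThan_empty_iff)
  show "Bfun n r \<gamma> z > 0" unfolding Bfun_def
    using n z bpos LL_pos[OF pr] TT_pos[OF pr] by (intro sum_pos) (auto simp: lessThan_empty_iff)
  have "aa \<gamma> 0 * TT r 0 * z^0 \<le> Pfun n r \<gamma> z" unfolding Pfun_def
    using z aa_pos[OF gp] TT_pos[OF pr]
    by (intro member_le_sum) (auto intro!: mult_nonneg_nonneg less_imp_le)
  thus "Pfun n r \<gamma> z \<ge> 1" by (simp add: aa_def TT_def)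
qed

lemma growth:
  fixes Stot Etot Ftot :: real
  assumes n: "1 \<le> n" and pr: "pos_rates n r" and gp: "\<forall>i\<in>{1..2*n}. 0 < \<gamma> i"
    and tot: "0 < Stot" "0 < Etot" "0 < Ftot"
  shows "\<exists>z'>z2. Stot * (Etot * Bfun n r \<gamma> z' - Ftot * z' * Afun n r \<gamma> z')
            < (Ftot * z' - Etot) * Pfun n r \<gamma> z'"
proof -
  define SB where "SB = (\<Sum>i<n. \<gamma> (n+1+i) * LL r i * TT r (Suc i))"
  define p where "p = aa \<gamma> n * TT r n"
  have bpos: "\<gamma> (n+1+i) > 0" if "i < n" for i using gp that by auto
  have SB0: "SB \<ge> 0" unfolding SB_def using bpos LL_pos[OF pr] TT_pos[OF pr]
    by (intro sum_nonneg) (auto intro!: mult_nonneg_nonneg less_imp_le)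
  have p0: "p > 0" unfolding p_def using aa_pos[OF gp] TT_pos[OF pr] by simp
  define z' where "z' = max z2 1 + (Stot * Etot * SB / p + Etot) / Ftot + 1"
  have q0: "(Stot * Etot * SB / p + Etot) / Ftot > 0" using tot SB0 p0 by (simp add: add_nonneg_pos)
  have z'1: "z' > z2" "z' \<ge> 1" unfolding z'_def using q0 by auto
  have Bb: "Bfun n r \<gamma> z' \<le> SB * z'^n"
    unfolding Bfun_def SB_def sum_distrib_right
  proof (rule sum_mono)
    fix i assume i: "i \<in> {..<n}"
    have c: "\<gamma> (n+1+i) * LL r i * TT r (Suc i) \<ge> 0" using bpos LL_pos[OF pr] TT_pos[OF pr] i
      by (auto intro!: mult_nonneg_nonneg less_imp_le)
    have "z'^(Suc i) \<le> z'^n" using i z'1 by (intro power_increasing) auto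
    thus "\<gamma> (n+1+i) * LL r i * TT r (Suc i) * z'^(Suc i) \<le> \<gamma> (n+1+i) * LL r i * TT r (Suc i) * z'^n"
      using c by (simp add: mult_left_mono)
  qed
  have Pb: "Pfun n r \<gamma> z' \<ge> p * z'^n"
  proof -
    have "aa \<gamma> n * TT r n * z'^n \<le> Pfun n r \<gamma> z'" unfolding Pfun_def
      using z'1 aa_pos[OF gp] TT_pos[OF pr]
      by (intro member_le_sum) (auto intro!: mult_nonneg_nonneg less_imp_le)
    thus ?thesis unfolding p_def .
  qed
  have Ap: "Afun n r \<gamma> z' > 0" using ABP_pos[OF n pr gp] z'1 by auto
  have Nb: "Ftot * z' - Etot > Stot * Etot * SB / p"
  proof -
    have "Ftot * ((Stot * Etot * SB / p + Etot) / Ftot + 1) \<le> Ftot * z'"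
      unfolding z'_def using tot by (intro mult_left_mono) auto
    moreover have "Ftot * ((Stot * Etot * SB / p + Etot) / Ftot + 1) = Stot * Etot * SB / p + Etot + Ftot"
      using tot by (simp add: field_simps)
    ultimately show ?thesis using tot by linarith
  qed
  have zn: "z'^n > 0" using z'1 by simp
  have "Stot * (Etot * Bfun n r \<gamma> z' - Ftot * z' * Afun n r \<gamma> z') \<le> Stot * Etot * (SB * z'^n)"
  proof -
    have "Etot * Bfun n r \<gamma> z' - Ftot * z' * Afun n r \<gamma> z' \<le> Etot * (SB * z'^n)"
    proof -
      have "Etot * Bfun n r \<gamma> z' \<le> Etot * (SB * z'^n)" using Bb tot by (simp add: mult_left_mono)
      moreover have "Ftot * z' * Afun n r \<gamma> z' > 0" using Ap tot z'1 by simp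
      ultimately show ?thesis by linarith
    qed
    thus ?thesis using tot by (simp add: mult_left_mono)
  qed
  also have "\<dots> = (Stot * Etot * SB / p) * (p * z'^n)" using p0 by (simp add: field_simps)
  also have "\<dots> < (Ftot * z' - Etot) * (p * z'^n)"
    using Nb p0 zn by (intro mult_strict_right_mono) auto
  also have "\<dots> \<le> (Ftot * z' - Etot) * Pfun n r \<gamma> z'"
  proof -
    have "Stot * Etot * SB / p \<ge> 0" using tot SB0 p0 by simp
    thus ?thesis using Pb Nb by (intro mult_left_mono) auto
  qed
  finally show ?thesis using z'1 by blast
qed



lemma main3:
  fixes Stot Etot Ftot :: real
  assumes n: "2 \<le> n" and pr: "pos_rates n r"
    and tot: "0 < Stot" "0 < Etot" "0 < Ftot" "Stot > Ftot"
    and kap: "kcat r 1 / lcat r 1 > max (Ftot / (Stot - Ftot)) (Ftot / Etot)"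
  shows "\<exists>\<delta>>0. \<forall>\<gamma>. (\<forall>i\<in>{1..2*n}. 0 < \<gamma> i) \<and> \<gamma> (n+1) < \<delta> \<and> \<gamma> (n+2) < \<delta>
     \<and> (\<forall>i\<in>{1..n}. \<gamma> i / \<gamma> (n+2) ^ i < \<delta>) \<and> (\<forall>i\<in>{3..n}. \<gamma> (n+i) / \<gamma> (n+2) ^ (i-1) < \<delta>)
     \<longrightarrow> multistationary n (resc n r \<gamma>) Stot Etot Ftot"
proof -
  have n1: "1 \<le> n" "1 < n" using n by auto
  define \<kappa> where "\<kappa> = kcat r 1 / lcat r 1"
  have lk: "lcat r 1 > 0" "kcat r 1 > 0" using pr n1 unfolding pos_rates_def by auto
  have kp: "\<kappa> > 0" unfolding \<kappa>_def using lk by simp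
  define k1 where "k1 = KK r 1 * TT r 1"
  have k1p: "k1 > 0" unfolding k1_def using KK_pos[OF pr n1(2)] TT_pos[OF pr, of 1] n1 by simp
  define c1 where "c1 = cc r Etot Ftot 1"
  have kapE: "Etot * \<kappa> - Ftot > 0"
  proof -
    have "Ftot / Etot < \<kappa>" using kap unfolding \<kappa>_def by simp
    thus ?thesis using tot by (simp add: field_simps)
  qed
  have kapS: "Ftot / \<kappa> < Stot - Ftot"
  proof -
    have "Ftot / (Stot - Ftot) < \<kappa>" using kap unfolding \<kappa>_def by simp
    hence "Ftot < \<kappa> * (Stot - Ftot)" using tot by (simp add: field_simps)
    thus ?thesis using kp by (simp add: field_simps)
  qed
  have c1_eq: "c1 = k1 * (Etot * \<kappa> - Ftot)"
  proof -
    have "lcat r 1 * LL r 1 * tau r 1 = kcat r 1 * KK r 1" by (rule lcat_LL_tau[OF pr n1(2)])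
    hence "LL r 1 * tau r 1 = \<kappa> * KK r 1" unfolding \<kappa>_def using lk by (simp add: field_simps)
    thus ?thesis unfolding c1_def cc_def k1_def by (simp add: algebra_simps)
  qed
  have c1p: "c1 > 0" unfolding c1_eq using k1p kapE by simp
  define G where "G = Stot - Ftot - Ftot / \<kappa>"
  have Gp: "G > 0" unfolding G_def using kapS by simp
  have GS: "G < Stot"
  proof -
    have "Ftot / \<kappa> > 0" using kp tot by simp
    thus ?thesis unfolding G_def using tot by linarith
  qed
  define t0 where "t0 = Ftot / (Etot * \<kappa> - Ftot)"
  have t0p: "t0 \<ge> 0" unfolding t0_def using kapE tot by simp
  have t0c: "Ftot * k1 = t0 * c1" unfolding t0_def c1_eq using kapE by simp
  have t0E: "Etot * (t0 / (1 + t0)) = Ftot / \<kappa>"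
    unfolding t0_def using kapE kp tot by (simp add: field_simps)
  define \<eta> where "\<eta> = G / (4 * Etot)"
  have \<eta>p: "\<eta> > 0" unfolding \<eta>_def using Gp tot by simp
  define wl where "wl = Ftot / (6 * Stot * c1)"
  define wh where "wh = 8 * Ftot / (G * c1)"
  have wlp: "wl > 0" unfolding wl_def using tot c1p by simp
  have whp: "wh > 0" unfolding wh_def using tot c1p Gp by simp
  have wlh: "wl < wh" unfolding wl_def wh_def using tot c1p Gp GS
    by (simp add: field_simps)
  define CD where "CD = (\<Sum>i<n. \<bar>cc r Etot Ftot i * wh^(Suc i)\<bar>)"
  define CA where "CA = (\<Sum>i<n. \<bar>KK r i * TT r i * wh^(Suc i)\<bar>)"
  define CP where "CP = (\<Sum>i\<le>n. \<bar>TT r i * wh^i\<bar>)"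
  have CD0: "CD \<ge> 0" "CA \<ge> 0" "CP \<ge> 0" unfolding CD_def CA_def CP_def by (auto intro: sum_nonneg)
  define \<delta> where "\<delta> = min (min (Ftot * wl / (2 * Etot)) (c1 * wl^2 / (2 * (CD + 1))))
      (min (1 / (CP + 1)) (\<eta> * c1 * wh^2 / (Ftot * CA + (t0 + \<eta>) * CD + 1)))"
  have den4: "Ftot * CA + (t0 + \<eta>) * CD + 1 > 0" using CD0 tot t0p \<eta>p
    by (simp add: add_nonneg_pos)
  have \<delta>p: "\<delta> > 0" unfolding \<delta>_def using tot wlp c1p CD0 \<eta>p whp den4
    by (auto intro!: divide_pos_pos mult_pos_pos add_nonneg_pos)
  have \<delta>1: "\<delta> * Etot \<le> Ftot * wl / 2"
  proof -
    have "\<delta> \<le> Ftot * wl / (2 * Etot)" unfolding \<delta>_def by simp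
    thus ?thesis using tot by (simp add: field_simps)
  qed
  have \<delta>2: "\<delta> * CD \<le> c1 * wl^2 / 2"
  proof -
    have "\<delta> \<le> c1 * wl^2 / (2 * (CD + 1))" unfolding \<delta>_def by simp
    hence "\<delta> * CD \<le> c1 * wl^2 / (2 * (CD + 1)) * CD" using CD0 by (intro mult_right_mono) auto
    also have "\<dots> \<le> c1 * wl^2 / 2" using CD0 c1p wlp by (simp add: field_simps)
    finally show ?thesis .
  qed
  have \<delta>3: "\<delta> * CP \<le> 1"
  proof -
    have "\<delta> \<le> 1 / (CP + 1)" unfolding \<delta>_def by simp
    hence "\<delta> * CP \<le> 1 / (CP + 1) * CP" using CD0 by (intro mult_right_mono) auto
    also have "\<dots> \<le> 1" using CD0 by (simp add: field_simps)
    finally show ?thesis .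
  qed
  have \<delta>4: "\<delta> * (Ftot * CA + (t0 + \<eta>) * CD) \<le> \<eta> * c1 * wh^2"
  proof -
    have "\<delta> \<le> \<eta> * c1 * wh^2 / (Ftot * CA + (t0 + \<eta>) * CD + 1)" unfolding \<delta>_def by simp
    hence "\<delta> * (Ftot * CA + (t0 + \<eta>) * CD) \<le> \<eta> * c1 * wh^2 / (Ftot * CA + (t0 + \<eta>) * CD + 1) * (Ftot * CA + (t0 + \<eta>) * CD)"
      using CD0 tot t0p \<eta>p by (intro mult_right_mono) auto
    also have "\<dots> \<le> \<eta> * c1 * wh^2" using den4 \<eta>p c1p whp
      by (simp add: field_simps)
    finally show ?thesis .
  qed
  show ?thesis
  proof (intro exI[of _ \<delta>] conjI allI impI \<delta>p)
    fix \<gamma> :: "nat \<Rightarrow> real"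
    assume H: "(\<forall>i\<in>{1..2*n}. 0 < \<gamma> i) \<and> \<gamma> (n+1) < \<delta> \<and> \<gamma> (n+2) < \<delta>
     \<and> (\<forall>i\<in>{1..n}. \<gamma> i / \<gamma> (n+2) ^ i < \<delta>) \<and> (\<forall>i\<in>{3..n}. \<gamma> (n+i) / \<gamma> (n+2) ^ (i-1) < \<delta>)"
    have gp: "\<forall>i\<in>{1..2*n}. 0 < \<gamma> i" using H by blast
    define \<epsilon> where "\<epsilon> = \<gamma> (n+2)"
    have \<epsilon>p: "\<epsilon> > 0" unfolding \<epsilon>_def using gp n by auto
    have \<epsilon>\<delta>: "\<epsilon> < \<delta>" unfolding \<epsilon>_def using H by blast
    define lam where "lam = (\<lambda>i. \<gamma> (n+1+i) / \<epsilon>^i)"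
    have lam1: "lam 1 = 1" unfolding lam_def \<epsilon>_def using \<epsilon>p \<epsilon>_def by simp
    have lamb: "\<bar>lam i\<bar> \<le> \<delta>" if "i \<in> {..<n}" "i \<noteq> 1" for i
    proof (cases "i = 0")
      case True
      have "\<gamma> (n+1) > 0" using gp n by auto
      thus ?thesis using True H unfolding lam_def by auto
    next
      case False
      hence i2: "i + 1 \<in> {3..n}" using that by auto
      have "\<gamma> (n + (i+1)) / \<gamma> (n+2) ^ (i + 1 - 1) < \<delta>" using H i2 by blast
      moreover have "\<gamma> (n+1+i) > 0" using gp that by auto
      moreover have "\<gamma> (n+2) > 0" using \<epsilon>p unfolding \<epsilon>_def .
      ultimately show ?thesis unfolding lam_def \<epsilon>_def
        by (simp add: add.commute add.left_commute abs_of_pos)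
    qed
    define sig where "sig = (\<lambda>i. aa \<gamma> i / \<epsilon>^i)"
    have sig0: "sig 0 = 1" unfolding sig_def aa_def by simp
    have sigb: "\<bar>sig i\<bar> \<le> \<delta>" if "i \<in> {..n}" "i \<noteq> 0" for i
    proof -
      have "\<gamma> i / \<gamma> (n+2) ^ i < \<delta>" using H that by auto
      moreover have "\<gamma> i > 0" using gp that by auto
      ultimately show ?thesis unfolding sig_def aa_def \<epsilon>_def using that \<epsilon>p \<epsilon>_def by auto
    qed
    define A where "A = Afun n r \<gamma>"
    define B where "B = Bfun n r \<gamma>"
    define P where "P = Pfun n r \<gamma>"
    define N where "N = (\<lambda>z::real. Ftot*z - Etot)"
    define D where "D = (\<lambda>z. Etot * B z - Ftot * z * A z)"
    define X where "X = (\<lambda>z. N z / D z)"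
    define F where "F = (\<lambda>z. Ftot / (1 + X z * B z))"
    define g where "g = (\<lambda>z. X z * P z - z * F z - F z + Etot + Ftot - Stot)"
    have EDb: "\<bar>\<epsilon> * D (w/\<epsilon>) - c1 * w^2\<bar> \<le> \<delta> * CD" if "w > 0" "w \<le> wh" for w
    proof -
      have "\<epsilon> * D (w/\<epsilon>) = (\<Sum>i<n. lam i * (cc r Etot Ftot i * w^(Suc i)))"
        unfolding D_def A_def B_def lam_def by (rule D_scaled[OF \<epsilon>p])
      hence "\<bar>\<epsilon> * D (w/\<epsilon>) - c1 * w^2\<bar> \<le> \<delta> * (\<Sum>i<n. \<bar>cc r Etot Ftot i * w^(Suc i)\<bar>)"
        unfolding c1_def using sum_pert[of "{..<n}" 1 lam \<delta> "\<lambda>i. cc r Etot Ftot i * w^(Suc i)"]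
          n1 lam1 lamb \<delta>p by (simp add: power2_eq_square)
      also have "\<dots> \<le> \<delta> * CD" unfolding CD_def
      proof (intro mult_left_mono sum_mono)
        fix i assume "i \<in> {..<n}"
        have "w^(Suc i) \<le> wh^(Suc i)" using that by (intro power_mono) auto
        thus "\<bar>cc r Etot Ftot i * w^(Suc i)\<bar> \<le> \<bar>cc r Etot Ftot i * wh^(Suc i)\<bar>"
          using that whp by (simp add: abs_mult mult_left_mono)
      qed (use \<delta>p in auto)
      finally show ?thesis .
    qed
    have EDlow: "\<epsilon> * D (w/\<epsilon>) \<ge> c1 * w^2 / 2" if "wl \<le> w" "w \<le> wh" for w
    proof -
      have "wl^2 \<le> w^2" using that wlp by (intro power_mono) auto
      hence "c1 * wl^2 \<le> c1 * w^2" using c1p by simp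
      thus ?thesis using EDb[of w] that wlp \<delta>2 by (auto simp: abs_le_iff)
    qed
    have EDup: "\<epsilon> * D (wl/\<epsilon>) \<le> 3/2 * c1 * wl^2"
      using EDb[of wl] wlp wlh \<delta>2 by (auto simp: abs_le_iff)
    have EAb: "\<bar>\<epsilon> * (wh/\<epsilon>) * A (wh/\<epsilon>) - k1 * wh^2\<bar> \<le> \<delta> * CA"
    proof -
      have "\<epsilon> * (wh/\<epsilon>) * A (wh/\<epsilon>) = (\<Sum>i<n. lam i * (KK r i * TT r i * wh^(Suc i)))"
        unfolding A_def lam_def by (rule A_scaled[OF \<epsilon>p])
      thus ?thesis
        unfolding k1_def CA_def using sum_pert[of "{..<n}" 1 lam \<delta> "\<lambda>i. KK r i * TT r i * wh^(Suc i)"]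
          n1 lam1 lamb \<delta>p by (simp add: power2_eq_square)
    qed
    have Pb: "\<bar>P (wh/\<epsilon>) - 1\<bar> \<le> \<delta> * CP"
    proof -
      have "P (wh/\<epsilon>) = (\<Sum>i\<le>n. sig i * (TT r i * wh^i))"
        unfolding P_def sig_def by (rule P_scaled[OF \<epsilon>p])
      thus ?thesis
        unfolding CP_def using sum_pert[of "{..n}" 0 sig \<delta> "\<lambda>i. TT r i * wh^i"]
          sig0 sigb \<delta>p by (simp add: TT_def)
    qed
    define z1 where "z1 = wl / \<epsilon>"
    define z2 where "z2 = wh / \<epsilon>"
    have z12: "0 < z1" "z1 < z2" unfolding z1_def z2_def using wlp wlh \<epsilon>p by (auto simp: divide_strict_right_mono)
    have Dpos: "D z > 0" if "z1 \<le> z" "z \<le> z2" for z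
    proof -
      define w where "w = \<epsilon> * z"
      have zw: "z = w / \<epsilon>" unfolding w_def using \<epsilon>p by simp
      have w: "wl \<le> w" "w \<le> wh" using that \<epsilon>p unfolding w_def z1_def z2_def by (auto simp: field_simps)
      have "\<epsilon> * D z \<ge> c1 * w^2 / 2" unfolding zw by (rule EDlow[OF w])
      moreover have "c1 * w^2 / 2 > 0" using c1p w wlp by simp
      ultimately have "\<epsilon> * D z > 0" by linarith
      thus ?thesis using \<epsilon>p by (simp add: zero_less_mult_iff)
    qed
    have \<epsilon>N: "\<epsilon> * N (w / \<epsilon>) = Ftot * w - \<epsilon> * Etot" for w
      unfolding N_def using \<epsilon>p by (simp add: field_simps)
    have Nz1: "N z1 > 0"
    proof -
      have a: "\<epsilon> * Etot < \<delta> * Etot" using \<epsilon>\<delta> tot by simp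
      have b: "\<epsilon> * N z1 = Ftot * wl - \<epsilon> * Etot" unfolding z1_def \<epsilon>N ..
      have c: "Ftot * wl > 0" using tot wlp by simp
      have "\<epsilon> * N z1 > 0" using a b c \<delta>1 by linarith
      thus ?thesis using \<epsilon>p by (simp add: zero_less_mult_iff)
    qed
    have ABP: "A z > 0" "B z > 0" "P z \<ge> 1" if "z > 0" for z
      unfolding A_def B_def P_def using ABP_pos[OF n1(1) pr gp that] by auto
    have facts: "X z > 0 \<and> F z \<le> Ftot \<and> F z \<ge> 0 \<and> z * F z = Etot / (1 + X z * A z)"
      if "z1 \<le> z" "z \<le> z2" for z
    proof -
      have z0: "z > 0" using that z12 by simp
      have Nz: "N z > 0"
      proof -
        have "N z \<ge> N z1" unfolding N_def using that tot by (simp add: mult_left_mono)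
        thus ?thesis using Nz1 by simp
      qed
      have Xp: "X z > 0" unfolding X_def using Nz Dpos[OF that] by simp
      have XD: "X z * (Etot * B z - Ftot * z * A z) = Ftot * z - Etot"
        using Dpos[OF that] unfolding X_def D_def N_def by simp
      have p1: "1 + X z * B z > 0" using Xp ABP[OF z0] by (simp add: add_pos_pos)
      have "F z \<le> Ftot" unfolding F_def using p1 tot Xp ABP[OF z0] by (simp add: field_simps)
      moreover have "F z \<ge> 0" unfolding F_def using p1 tot by simp
      moreover have "z * F z = Etot / (1 + X z * A z)"
        unfolding F_def by (rule ident_alg[OF XD Xp]) (use ABP[OF z0] in auto)
      ultimately show ?thesis using Xp by simp
    qed
    have g1: "g z1 > 0"
    proof -
      have ED: "\<epsilon> * D z1 \<le> 3/2 * c1 * wl^2" "\<epsilon> * D z1 > 0"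
        using EDup Dpos[of z1] z12 \<epsilon>p unfolding z1_def by auto
      have EN: "\<epsilon> * N z1 \<ge> Ftot * wl / 2"
      proof -
        have a: "\<epsilon> * Etot \<le> \<delta> * Etot" using \<epsilon>\<delta> tot by simp
        have b: "\<epsilon> * N z1 = Ftot * wl - \<epsilon> * Etot" unfolding z1_def \<epsilon>N ..
        show ?thesis using a b \<delta>1 by linarith
      qed
      have Xe: "X z1 = (\<epsilon> * N z1) / (\<epsilon> * D z1)" unfolding X_def using \<epsilon>p by simp
      have "X z1 \<ge> (Ftot * wl / 2) / (3/2 * c1 * wl^2)"
        unfolding Xe
      proof (rule frac_le)
        have "Ftot * wl / 2 > 0" using tot wlp by simp
        thus "0 \<le> \<epsilon> * N z1" using EN by linarith
        show "Ftot * wl / 2 \<le> \<epsilon> * N z1" by (rule EN)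
        show "0 < \<epsilon> * D z1" by (rule ED(2))
        show "\<epsilon> * D z1 \<le> 3/2 * c1 * wl^2" by (rule ED(1))
      qed
      also have "(Ftot * wl / 2) / (3/2 * c1 * wl^2) = 2 * Stot"
        unfolding wl_def using tot c1p by (simp add: field_simps power2_eq_square)
      finally have X2: "X z1 \<ge> 2 * Stot" .
      have f1: "X z1 > 0 \<and> F z1 \<le> Ftot \<and> F z1 \<ge> 0 \<and> z1 * F z1 = Etot / (1 + X z1 * A z1)"
        using facts[of z1] z12 by simp
      have q: "X z1 * A z1 \<ge> 0" using f1 ABP[of z1] z12 by simp
      have "Etot \<le> Etot * (1 + X z1 * A z1)" using q tot by (simp add: algebra_simps)
      hence "Etot / (1 + X z1 * A z1) \<le> Etot" using q by (simp add: pos_divide_le_eq)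
      moreover have "X z1 * P z1 \<ge> X z1 * 1" using f1 ABP[of z1] z12 by (intro mult_left_mono) auto
      moreover have "g z1 = X z1 * P z1 - z1 * F z1 - F z1 + Etot + Ftot - Stot" unfolding g_def ..
      ultimately have "g z1 \<ge> X z1 - Stot" using f1 by linarith
      thus ?thesis using X2 tot by linarith
    qed
    have g2: "g z2 < 0"
    proof -
      have z2f: "z1 \<le> z2" "z2 \<le> z2" using z12 by auto
      have ED: "\<epsilon> * D z2 \<ge> c1 * wh^2 / 2" unfolding z2_def by (rule EDlow) (use wlh in auto)
      have EDp: "c1 * wh^2 / 2 > 0" using c1p whp by simp
      have EN1: "\<epsilon> * N z2 = Ftot * wh - \<epsilon> * Etot" unfolding z2_def \<epsilon>N ..
      have "\<epsilon> * Etot > 0" using \<epsilon>p tot by simp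
      hence EN_a: "\<epsilon> * N z2 \<le> Ftot * wh" using EN1 by linarith
      have "X z2 > 0" "D z2 > 0" using facts[OF z2f] Dpos[OF z2f] by auto
      hence "N z2 > 0" unfolding X_def by (simp add: zero_less_divide_iff)
      hence EN_b: "\<epsilon> * N z2 > 0" using \<epsilon>p by simp
      note EN = EN_a EN_b
      have Xe: "X z2 = (\<epsilon> * N z2) / (\<epsilon> * D z2)" unfolding X_def using \<epsilon>p by simp
      have "X z2 \<le> (Ftot * wh) / (c1 * wh^2 / 2)"
        unfolding Xe using ED EN EDp tot whp by (intro frac_le) auto
      also have "\<dots> = G / 4" unfolding wh_def using tot c1p Gp by (simp add: field_simps power2_eq_square)
      finally have Xb: "X z2 \<le> G / 4" .
      have f2: "X z2 > 0 \<and> F z2 \<le> Ftot \<and> F z2 \<ge> 0 \<and> z2 * F z2 = Etot / (1 + X z2 * A z2)"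
        using facts[OF z2f] .
      have P2: "P z2 \<le> 2" using Pb \<delta>3 unfolding z2_def by (auto simp: abs_le_iff)
      have XP: "X z2 * P z2 \<le> G / 4 * 2"
        using Xb P2 f2 ABP[of z2] z12 by (intro mult_mono) auto
      define EA where "EA = \<epsilon> * z2 * A z2"
      have EAb': "EA \<le> k1 * wh^2 + \<delta> * CA" using EAb unfolding EA_def z2_def by (auto simp: abs_le_iff)
      have EAp: "EA > 0" unfolding EA_def using \<epsilon>p ABP[of z2] z12 by simp
      have EDb2: "\<epsilon> * D z2 \<ge> c1 * wh^2 - \<delta> * CD" using EDb[of wh] whp unfolding z2_def
        by (auto simp: abs_le_iff)
      define q where "q = X z2 * A z2"
      have qe: "q = (\<epsilon> * N z2) / (\<epsilon> * D z2) * EA / wh"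
        unfolding q_def Xe EA_def z2_def using \<epsilon>p whp by (simp add: field_simps X_def)
      have "q \<le> (Ftot * wh) / (\<epsilon> * D z2) * EA / wh"
        unfolding qe using EN ED EDp EAp whp
        by (intro divide_right_mono mult_right_mono divide_right_mono) auto
      also have "\<dots> = Ftot * EA / (\<epsilon> * D z2)" using whp by (simp add: field_simps)
      also have "\<dots> \<le> t0 + \<eta>"
      proof -
        have "Ftot * EA \<le> Ftot * (k1 * wh^2 + \<delta> * CA)" using EAb' tot by simp
        also have "\<dots> = t0 * c1 * wh^2 + \<delta> * Ftot * CA" using t0c by (simp add: algebra_simps)
        also have "\<dots> \<le> (t0 + \<eta>) * (c1 * wh^2 - \<delta> * CD)"
          using \<delta>4 by (simp add: algebra_simps)
        also have "\<dots> \<le> (t0 + \<eta>) * (\<epsilon> * D z2)" using EDb2 t0p \<eta>p by (intro mult_left_mono) auto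
        finally have "Ftot * EA \<le> (t0 + \<eta>) * (\<epsilon> * D z2)" .
        thus ?thesis using ED EDp by (simp add: divide_le_eq)
      qed
      finally have qb: "q \<le> t0 + \<eta>" .
      have q0: "q \<ge> 0" unfolding q_def using f2 ABP[of z2] z12 by simp
      have "Etot - z2 * F z2 = Etot * (q / (1 + q))"
        using f2 q0 unfolding q_def[symmetric] by (simp add: field_simps)
      also have "\<dots> \<le> Etot * (t0 / (1 + t0) + \<eta>)"
        using frac_bound[OF q0 qb t0p] \<eta>p tot by (intro mult_left_mono) auto
      also have "\<dots> = Ftot / \<kappa> + G / 4" using t0E tot unfolding \<eta>_def by (simp add: algebra_simps)
      finally have Eb: "Etot - z2 * F z2 \<le> Ftot / \<kappa> + G / 4" .
      have ge: "g z2 = X z2 * P z2 - z2 * F z2 - F z2 + Etot + Ftot - Stot" unfolding g_def ..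
      have F0: "F z2 \<ge> 0" using f2 by blast
      show ?thesis using ge XP Eb F0 Gp G_def by linarith
    qed
    have grow: "\<exists>z'>z2. Stot * D z' < N z' * P z'"
      using growth[OF n1(1) pr gp tot(1,2,3), of z2] unfolding D_def N_def A_def B_def P_def by simp
    have roots: "\<exists>za zb. za \<noteq> zb \<and> za > 0 \<and> zb > 0 \<and> N za > 0 \<and> N zb > 0 \<and> D za > 0 \<and> D zb > 0
          \<and> g za = 0 \<and> g zb = 0"
      by (rule two_roots[OF N_def D_def X_def F_def g_def])
         (use ABP_cont ABP z12 Nz1 Dpos g1 g2 grow tot in \<open>auto simp: A_def B_def P_def intro: less_le_trans[OF zero_less_one]\<close>)
    show "multistationary n (resc n r \<gamma>) Stot Etot Ftot"
    proof -
      have D': "D = (\<lambda>z. Etot * Bfun n r \<gamma> z - Ftot * z * Afun n r \<gamma> z)" unfolding D_def A_def B_def ..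
      have F': "F = (\<lambda>z. Ftot / (1 + X z * Bfun n r \<gamma> z))" unfolding F_def B_def ..
      have g': "g = (\<lambda>z. X z * Pfun n r \<gamma> z - z * F z - F z + Etot + Ftot - Stot)" unfolding g_def P_def ..
      show ?thesis by (rule ms_from_roots[OF n1(1) pr gp tot(1,2,3) N_def D' X_def F' g' roots])
    qed
  qed
qed



lemma ev_powr:
  fixes a c :: real
  assumes "a > 0" "c > 0"
  shows "eventually (\<lambda>t. t powr a < c) (at_right 0)"
  unfolding eventually_at_right_field
proof (intro exI[of _ "c powr (1/a)"] conjI allI impI)
  show "0 < c powr (1/a)" using assms by simp
  fix y :: real assume y: "0 < y" "y < c powr (1/a)"
  have "y powr a < (c powr (1/a)) powr a" using y assms by (intro powr_less_mono2) auto
  also have "\<dots> = c" using assms by (simp add: powr_powr)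
  finally show "y powr a < c" .
qed

lemma part3:
  fixes n :: nat and Stot Etot Ftot :: real
  assumes n: "2 \<le> n" and tot: "0 < Stot" "0 < Etot" "0 < Ftot" "Stot > Ftot"
  shows "\<forall>r. pos_rates n r \<and>
       kcat r 1 / lcat r 1 > max (Ftot / (Stot - Ftot)) (Ftot / Etot)
       \<longrightarrow> (\<exists>M :: nat \<Rightarrow> real. (\<forall>i\<in>{1..4*n-2}. 0 < M i) \<and>
            (\<forall>\<gamma> :: nat \<Rightarrow> real.
               (\<forall>i\<in>{1..2*n}. 0 < \<gamma> i) \<and>
               (\<forall>i\<in>{1..2*n}. \<gamma> i < M i) \<and>
               (\<forall>i\<in>{1..n}. \<gamma> i / \<gamma> (n+2) ^ i < M (2*n+i)) \<and>
               (\<forall>i\<in>{3..n}. \<gamma> (n+i) / \<gamma> (n+2) ^ (i-1) < M (3*n-2+i))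
               \<longrightarrow> multistationary n
                     (r\<lparr>kon := (\<lambda>i. if i = 0 then \<gamma> (n+1) * kon r 0
                                     else \<gamma> (n+1+i) / \<gamma> i * kon r i),
                        lon := (\<lambda>i. \<gamma> (n+1+i) / \<gamma> (i+1) * lon r i)\<rparr>)
                     Stot Etot Ftot))"
proof (intro allI impI)
  fix r assume a: "pos_rates n r \<and> kcat r 1 / lcat r 1 > max (Ftot / (Stot - Ftot)) (Ftot / Etot)"
  obtain \<delta> where \<delta>: "\<delta> > 0" and H: "\<And>\<gamma>. (\<forall>i\<in>{1..2*n}. 0 < \<gamma> i) \<and> \<gamma> (n+1) < \<delta> \<and> \<gamma> (n+2) < \<delta>
     \<and> (\<forall>i\<in>{1..n}. \<gamma> i / \<gamma> (n+2) ^ i < \<delta>) \<and> (\<forall>i\<in>{3..n}. \<gamma> (n+i) / \<gamma> (n+2) ^ (i-1) < \<delta>)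
     \<Longrightarrow> multistationary n (resc n r \<gamma>) Stot Etot Ftot"
    using main3[OF n _ tot, of r] a by blast
  show "\<exists>M :: nat \<Rightarrow> real. (\<forall>i\<in>{1..4*n-2}. 0 < M i) \<and>
            (\<forall>\<gamma> :: nat \<Rightarrow> real.
               (\<forall>i\<in>{1..2*n}. 0 < \<gamma> i) \<and>
               (\<forall>i\<in>{1..2*n}. \<gamma> i < M i) \<and>
               (\<forall>i\<in>{1..n}. \<gamma> i / \<gamma> (n+2) ^ i < M (2*n+i)) \<and>
               (\<forall>i\<in>{3..n}. \<gamma> (n+i) / \<gamma> (n+2) ^ (i-1) < M (3*n-2+i))
               \<longrightarrow> multistationary n
                     (r\<lparr>kon := (\<lambda>i. if i = 0 then \<gamma> (n+1) * kon r 0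
                                     else \<gamma> (n+1+i) / \<gamma> i * kon r i),
                        lon := (\<lambda>i. \<gamma> (n+1+i) / \<gamma> (i+1) * lon r i)\<rparr>)
                     Stot Etot Ftot)"
  proof (intro exI[of _ "\<lambda>_. \<delta>"] conjI ballI allI impI)
    fix i show "0 < \<delta>" by (rule \<delta>)
  next
    fix \<gamma> :: "nat \<Rightarrow> real"
    assume G: "(\<forall>i\<in>{1..2*n}. 0 < \<gamma> i) \<and>
               (\<forall>i\<in>{1..2*n}. \<gamma> i < \<delta>) \<and>
               (\<forall>i\<in>{1..n}. \<gamma> i / \<gamma> (n+2) ^ i < \<delta>) \<and>
               (\<forall>i\<in>{3..n}. \<gamma> (n+i) / \<gamma> (n+2) ^ (i-1) < \<delta>)"
    have "\<gamma> (n+1) < \<delta>" "\<gamma> (n+2) < \<delta>" using G n by auto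
    hence "multistationary n (resc n r \<gamma>) Stot Etot Ftot" using G by (intro H) blast
    thus "multistationary n
                     (r\<lparr>kon := (\<lambda>i. if i = 0 then \<gamma> (n+1) * kon r 0
                                     else \<gamma> (n+1+i) / \<gamma> i * kon r i),
                        lon := (\<lambda>i. \<gamma> (n+1+i) / \<gamma> (i+1) * lon r i)\<rparr>)
                     Stot Etot Ftot" unfolding resc_def .
  qed
qed



lemma part2:
  fixes n :: nat and Stot Etot Ftot :: real
  assumes n: "2 \<le> n" and tot: "0 < Stot" "0 < Etot" "0 < Ftot" "Stot > Ftot"
  shows "\<forall>r (h :: nat \<Rightarrow> real).
       pos_rates n r \<and>
       kcat r 1 / lcat r 1 > max (Ftot / (Stot - Ftot)) (Ftot / Etot) \<and>
       (\<forall>i\<in>{4..2*n+3}. 0 < h i) \<and>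
       (\<forall>i\<in>{1..n}. real i * h (n+5) < h (i+3)) \<and>
       (\<forall>i\<in>{1..n}. i \<noteq> 2 \<longrightarrow> (real i - 1) * h (n+5) < h (n+i+3))
       \<longrightarrow> (\<exists>t0 > 0. \<forall>t. 0 < t \<and> t < t0 \<longrightarrow>
              multistationary n
                (r\<lparr>kon := (\<lambda>i. if i = 0 then t powr h (n+4) * kon r 0
                                else t powr (h (n+4+i) - h (i+3)) * kon r i),
                   lon := (\<lambda>i. t powr (h (n+4+i) - h (i+4)) * lon r i)\<rparr>)
                Stot Etot Ftot)"
proof (intro allI impI)
  fix r and h :: "nat \<Rightarrow> real"
  assume a: "pos_rates n r \<and>
       kcat r 1 / lcat r 1 > max (Ftot / (Stot - Ftot)) (Ftot / Etot) \<and>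
       (\<forall>i\<in>{4..2*n+3}. 0 < h i) \<and>
       (\<forall>i\<in>{1..n}. real i * h (n+5) < h (i+3)) \<and>
       (\<forall>i\<in>{1..n}. i \<noteq> 2 \<longrightarrow> (real i - 1) * h (n+5) < h (n+i+3))"
  have hp: "\<And>i. i \<in> {4..2*n+3} \<Longrightarrow> 0 < h i" using a by blast
  have hc1: "\<And>i. i \<in> {1..n} \<Longrightarrow> real i * h (n+5) < h (i+3)" using a by blast
  have hc2: "\<And>i. i \<in> {1..n} \<Longrightarrow> i \<noteq> 2 \<Longrightarrow> (real i - 1) * h (n+5) < h (n+i+3)" using a by blast
  have a12: "pos_rates n r \<and> kcat r 1 / lcat r 1 > max (Ftot / (Stot - Ftot)) (Ftot / Etot)"
    using a by blast
  have ex: "\<exists>M :: nat \<Rightarrow> real. (\<forall>i\<in>{1..4*n-2}. 0 < M i) \<and>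
            (\<forall>\<gamma> :: nat \<Rightarrow> real.
               (\<forall>i\<in>{1..2*n}. 0 < \<gamma> i) \<and>
               (\<forall>i\<in>{1..2*n}. \<gamma> i < M i) \<and>
               (\<forall>i\<in>{1..n}. \<gamma> i / \<gamma> (n+2) ^ i < M (2*n+i)) \<and>
               (\<forall>i\<in>{3..n}. \<gamma> (n+i) / \<gamma> (n+2) ^ (i-1) < M (3*n-2+i))
               \<longrightarrow> multistationary n
                     (r\<lparr>kon := (\<lambda>i. if i = 0 then \<gamma> (n+1) * kon r 0
                                     else \<gamma> (n+1+i) / \<gamma> i * kon r i),
                        lon := (\<lambda>i. \<gamma> (n+1+i) / \<gamma> (i+1) * lon r i)\<rparr>)
                     Stot Etot Ftot)"
    by (rule mp[OF part3[OF n tot, THEN spec[of _ r]] a12])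
  then obtain M where MM: "(\<forall>i\<in>{1..4*n-2}. 0 < M i) \<and>
            (\<forall>\<gamma> :: nat \<Rightarrow> real.
               (\<forall>i\<in>{1..2*n}. 0 < \<gamma> i) \<and>
               (\<forall>i\<in>{1..2*n}. \<gamma> i < M i) \<and>
               (\<forall>i\<in>{1..n}. \<gamma> i / \<gamma> (n+2) ^ i < M (2*n+i)) \<and>
               (\<forall>i\<in>{3..n}. \<gamma> (n+i) / \<gamma> (n+2) ^ (i-1) < M (3*n-2+i))
               \<longrightarrow> multistationary n
                     (r\<lparr>kon := (\<lambda>i. if i = 0 then \<gamma> (n+1) * kon r 0
                                     else \<gamma> (n+1+i) / \<gamma> i * kon r i),
                        lon := (\<lambda>i. \<gamma> (n+1+i) / \<gamma> (i+1) * lon r i)\<rparr>)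
                     Stot Etot Ftot)" by (rule exE)
  note Mp = MM[THEN conjunct1]
  note MH = MM[THEN conjunct2, rule_format]
  have ev1: "eventually (\<lambda>t. \<forall>i\<in>{1..2*n}. t powr h (i+3) < M i) (at_right 0)"
  proof (rule eventually_ball_finite)
    show "\<forall>i\<in>{1..2*n}. eventually (\<lambda>t. t powr h (i+3) < M i) (at_right 0)"
    proof
      fix i assume i: "i \<in> {1..2*n}"
      have "h (i+3) > 0" using hp i by auto
      moreover have "M i > 0" using Mp i n by auto
      ultimately show "eventually (\<lambda>t. t powr h (i+3) < M i) (at_right 0)" by (rule ev_powr)
    qed
  qed simp
  have ev2: "eventually (\<lambda>t. \<forall>i\<in>{1..n}. t powr (h (i+3) - real i * h (n+5)) < M (2*n+i)) (at_right 0)"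
  proof (rule eventually_ball_finite)
    show "\<forall>i\<in>{1..n}. eventually (\<lambda>t. t powr (h (i+3) - real i * h (n+5)) < M (2*n+i)) (at_right 0)"
    proof
      fix i assume i: "i \<in> {1..n}"
      have "h (i+3) - real i * h (n+5) > 0" using hc1 i by auto
      moreover have "M (2*n+i) > 0" using Mp i n by auto
      ultimately show "eventually (\<lambda>t. t powr (h (i+3) - real i * h (n+5)) < M (2*n+i)) (at_right 0)" by (rule ev_powr)
    qed
  qed simp
  have ev3: "eventually (\<lambda>t. \<forall>i\<in>{3..n}. t powr (h (n+i+3) - (real i - 1) * h (n+5)) < M (3*n-2+i)) (at_right 0)"
  proof (rule eventually_ball_finite)
    show "\<forall>i\<in>{3..n}. eventually (\<lambda>t. t powr (h (n+i+3) - (real i - 1) * h (n+5)) < M (3*n-2+i)) (at_right 0)"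
    proof
      fix i assume i: "i \<in> {3..n}"
      have "h (n+i+3) - (real i - 1) * h (n+5) > 0" using hc2[of i] i by auto
      moreover have "3*n-2+i \<in> {1..4*n-2}" using i n by auto
      hence "M (3*n-2+i) > 0" using Mp by blast
      ultimately show "eventually (\<lambda>t. t powr (h (n+i+3) - (real i - 1) * h (n+5)) < M (3*n-2+i)) (at_right 0)" by (rule ev_powr)
    qed
  qed simp
  define Q where "Q = (\<lambda>t. (\<forall>i\<in>{1..2*n}. t powr h (i+3) < M i) \<and>
      (\<forall>i\<in>{1..n}. t powr (h (i+3) - real i * h (n+5)) < M (2*n+i)) \<and>
      (\<forall>i\<in>{3..n}. t powr (h (n+i+3) - (real i - 1) * h (n+5)) < M (3*n-2+i)))"
  have evQ: "eventually Q (at_right 0)" unfolding Q_def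
    by (intro eventually_conj ev1 ev2 ev3)
  obtain b :: real where b: "b > 0" and bQ: "\<And>t. t > 0 \<Longrightarrow> t < b \<Longrightarrow> Q t"
    using evQ unfolding eventually_at_right_field by blast
  show "\<exists>t0 > 0. \<forall>t. 0 < t \<and> t < t0 \<longrightarrow>
              multistationary n
                (r\<lparr>kon := (\<lambda>i. if i = 0 then t powr h (n+4) * kon r 0
                                else t powr (h (n+4+i) - h (i+3)) * kon r i),
                   lon := (\<lambda>i. t powr (h (n+4+i) - h (i+4)) * lon r i)\<rparr>)
                Stot Etot Ftot"
  proof (intro exI[of _ b] conjI allI impI b)
    fix t :: real assume t: "0 < t \<and> t < b"
    define \<gamma> where "\<gamma> = (\<lambda>j. t powr h (j+3))"
    have tp: "t > 0" using t by simp
    have P: "(\<forall>i\<in>{1..2*n}. t powr h (i+3) < M i) \<and>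
      (\<forall>i\<in>{1..n}. t powr (h (i+3) - real i * h (n+5)) < M (2*n+i)) \<and>
      (\<forall>i\<in>{3..n}. t powr (h (n+i+3) - (real i - 1) * h (n+5)) < M (3*n-2+i))"
      using bQ[of t] t unfolding Q_def by blast
    have c1: "\<forall>i\<in>{1..2*n}. 0 < \<gamma> i" unfolding \<gamma>_def using tp by simp
    have c2: "\<forall>i\<in>{1..2*n}. \<gamma> i < M i" unfolding \<gamma>_def using P by blast
    have a5: "n+2+3 = n+5" by simp
    have g2: "\<gamma> (n+2) = t powr h (n+5)" unfolding \<gamma>_def a5 ..
    have gpow: "\<gamma> (n+2) ^ k = t powr (real k * h (n+5))" for k
      unfolding g2 using tp by (simp add: powr_power)
    have c3: "\<forall>i\<in>{1..n}. \<gamma> i / \<gamma> (n+2) ^ i < M (2*n+i)"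
    proof
      fix i assume i: "i \<in> {1..n}"
      have "\<gamma> i / \<gamma> (n+2) ^ i = t powr (h (i+3) - real i * h (n+5))"
        unfolding gpow by (simp add: \<gamma>_def powr_diff)
      thus "\<gamma> i / \<gamma> (n+2) ^ i < M (2*n+i)" using P i by simp
    qed
    have c4: "\<forall>i\<in>{3..n}. \<gamma> (n+i) / \<gamma> (n+2) ^ (i-1) < M (3*n-2+i)"
    proof
      fix i assume i: "i \<in> {3..n}"
      have ri: "real (i - 1) = real i - 1" using i by (simp add: of_nat_diff)
      have "\<gamma> (n+i) / \<gamma> (n+2) ^ (i-1) = t powr (h (n+i+3) - (real i - 1) * h (n+5))"
        unfolding gpow ri by (simp add: \<gamma>_def powr_diff)
      thus "\<gamma> (n+i) / \<gamma> (n+2) ^ (i-1) < M (3*n-2+i)" using P i by simp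
    qed
    have ms: "multistationary n
                     (r\<lparr>kon := (\<lambda>i. if i = 0 then \<gamma> (n+1) * kon r 0
                                     else \<gamma> (n+1+i) / \<gamma> i * kon r i),
                        lon := (\<lambda>i. \<gamma> (n+1+i) / \<gamma> (i+1) * lon r i)\<rparr>)
                     Stot Etot Ftot"
      by (rule MH) (use c1 c2 c3 c4 in blast)
    have e1: "(\<lambda>i. if i = 0 then \<gamma> (n+1) * kon r 0 else \<gamma> (n+1+i) / \<gamma> i * kon r i)
       = (\<lambda>i. if i = 0 then t powr h (n+4) * kon r 0 else t powr (h (n+4+i) - h (i+3)) * kon r i)"
    proof
      fix i show "(if i = 0 then \<gamma> (n+1) * kon r 0 else \<gamma> (n+1+i) / \<gamma> i * kon r i)
        = (if i = 0 then t powr h (n+4) * kon r 0 else t powr (h (n+4+i) - h (i+3)) * kon r i)"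
      proof -
        have a1: "n+1+3 = n+4" "n+1+i+3 = n+4+i" by simp_all
        show ?thesis unfolding \<gamma>_def a1 by (simp add: powr_diff)
      qed
    qed
    have e2: "(\<lambda>i. \<gamma> (n+1+i) / \<gamma> (i+1) * lon r i) = (\<lambda>i. t powr (h (n+4+i) - h (i+4)) * lon r i)"
    proof
      fix i
      have a1: "n+1+i+3 = n+4+i" "i+1+3 = i+4" by simp_all
      show "\<gamma> (n+1+i) / \<gamma> (i+1) * lon r i = t powr (h (n+4+i) - h (i+4)) * lon r i"
        unfolding \<gamma>_def a1 by (simp add: powr_diff)
    qed
    show "multistationary n
                (r\<lparr>kon := (\<lambda>i. if i = 0 then t powr h (n+4) * kon r 0
                                else t powr (h (n+4+i) - h (i+3)) * kon r i),
                   lon := (\<lambda>i. t powr (h (n+4+i) - h (i+4)) * lon r i)\<rparr>)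
                Stot Etot Ftot" using ms unfolding e1 e2 .
  qed
qed



lemma part1:
  fixes n :: nat and Stot Etot Ftot :: real
  assumes n: "2 \<le> n" and tot: "0 < Stot" "0 < Etot" "0 < Ftot" "Stot > Ftot"
  shows "\<exists>r. pos_rates n r \<and> multistationary n r Stot Etot Ftot"
proof -
  define K where "K = max (Ftot / (Stot - Ftot)) (Ftot / Etot) + 1"
  have "Ftot / Etot > 0" using tot by simp
  hence K0: "K > 0" unfolding K_def by linarith
  define r0 where "r0 = \<lparr>kon = (\<lambda>_. 1), koff = (\<lambda>_. 1), kcat = (\<lambda>i. if i = 1 then K else 1),
     lon = (\<lambda>_. 1), loff = (\<lambda>_. 1), lcat = (\<lambda>_. 1)\<rparr>"
  have pr0: "pos_rates n r0" unfolding pos_rates_def r0_def using K0 by simp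
  have kap: "kcat r0 1 / lcat r0 1 > max (Ftot / (Stot - Ftot)) (Ftot / Etot)"
    unfolding r0_def K_def by simp
  define h0 :: "nat \<Rightarrow> real" where
    "h0 = (\<lambda>j. if j \<le> n+3 then real j - 2 else if j = n+5 then 1 else real j - real n - 3)"
  have h1: "\<forall>i\<in>{4..2*n+3}. 0 < h0 i" unfolding h0_def by auto
  have h5: "h0 (n+5) = 1" unfolding h0_def by simp
  have h2: "\<forall>i\<in>{1..n}. real i * h0 (n+5) < h0 (i+3)" unfolding h5 unfolding h0_def by auto
  have h3: "\<forall>i\<in>{1..n}. i \<noteq> 2 \<longrightarrow> (real i - 1) * h0 (n+5) < h0 (n+i+3)"
    unfolding h5 unfolding h0_def by auto
  have "pos_rates n r0 \<and>
       kcat r0 1 / lcat r0 1 > max (Ftot / (Stot - Ftot)) (Ftot / Etot) \<and>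
       (\<forall>i\<in>{4..2*n+3}. 0 < h0 i) \<and>
       (\<forall>i\<in>{1..n}. real i * h0 (n+5) < h0 (i+3)) \<and>
       (\<forall>i\<in>{1..n}. i \<noteq> 2 \<longrightarrow> (real i - 1) * h0 (n+5) < h0 (n+i+3))"
    using pr0 kap h1 h2 h3 by blast
  from mp[OF part2[OF n tot, THEN spec[of _ r0], THEN spec[of _ h0]] this]
  obtain t0 where t0: "t0 > 0" and T: "\<forall>t. 0 < t \<and> t < t0 \<longrightarrow>
              multistationary n
                (r0\<lparr>kon := (\<lambda>i. if i = 0 then t powr h0 (n+4) * kon r0 0
                                else t powr (h0 (n+4+i) - h0 (i+3)) * kon r0 i),
                   lon := (\<lambda>i. t powr (h0 (n+4+i) - h0 (i+4)) * lon r0 i)\<rparr>)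
                Stot Etot Ftot" by (elim exE conjE)
  define t where "t = t0 / 2"
  have t: "0 < t \<and> t < t0" unfolding t_def using t0 by simp
  define r1 where "r1 = r0\<lparr>kon := (\<lambda>i. if i = 0 then t powr h0 (n+4) * kon r0 0
                                else t powr (h0 (n+4+i) - h0 (i+3)) * kon r0 i),
                   lon := (\<lambda>i. t powr (h0 (n+4+i) - h0 (i+4)) * lon r0 i)\<rparr>"
  have "multistationary n r1 Stot Etot Ftot" unfolding r1_def using T t by blast
  moreover have "pos_rates n r1" unfolding r1_def pos_rates_def using pr0 t
    unfolding pos_rates_def by simp
  ultimately show ?thesis by blast
qed

theorem theorem4p1:
  fixes n :: nat and Stot Etot Ftot :: real
  assumes "2 \<le> n"
    and "0 < Stot" and "0 < Etot" and "0 < Ftot"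
    and "Stot > Ftot"
  shows
   "(\<exists>r. pos_rates n r \<and> multistationary n r Stot Etot Ftot)
    \<and>
    (\<forall>r (h :: nat \<Rightarrow> real).
       pos_rates n r \<and>
       kcat r 1 / lcat r 1 > max (Ftot / (Stot - Ftot)) (Ftot / Etot) \<and>
       (\<forall>i\<in>{4..2*n+3}. 0 < h i) \<and>
       (\<forall>i\<in>{1..n}. real i * h (n+5) < h (i+3)) \<and>
       (\<forall>i\<in>{1..n}. i \<noteq> 2 \<longrightarrow> (real i - 1) * h (n+5) < h (n+i+3))
       \<longrightarrow> (\<exists>t0 > 0. \<forall>t. 0 < t \<and> t < t0 \<longrightarrow>
              multistationary n
                (r\<lparr>kon := (\<lambda>i. if i = 0 then t powr h (n+4) * kon r 0
                                else t powr (h (n+4+i) - h (i+3)) * kon r i),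
                   lon := (\<lambda>i. t powr (h (n+4+i) - h (i+4)) * lon r i)\<rparr>)
                Stot Etot Ftot))
    \<and>
    (\<forall>r. pos_rates n r \<and>
       kcat r 1 / lcat r 1 > max (Ftot / (Stot - Ftot)) (Ftot / Etot)
       \<longrightarrow> (\<exists>M :: nat \<Rightarrow> real. (\<forall>i\<in>{1..4*n-2}. 0 < M i) \<and>
            (\<forall>\<gamma> :: nat \<Rightarrow> real.
               (\<forall>i\<in>{1..2*n}. 0 < \<gamma> i) \<and>
               (\<forall>i\<in>{1..2*n}. \<gamma> i < M i) \<and>
               (\<forall>i\<in>{1..n}. \<gamma> i / \<gamma> (n+2) ^ i < M (2*n+i)) \<and>
               (\<forall>i\<in>{3..n}. \<gamma> (n+i) / \<gamma> (n+2) ^ (i-1) < M (3*n-2+i))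
               \<longrightarrow> multistationary n
                     (r\<lparr>kon := (\<lambda>i. if i = 0 then \<gamma> (n+1) * kon r 0
                                     else \<gamma> (n+1+i) / \<gamma> i * kon r i),
                        lon := (\<lambda>i. \<gamma> (n+1+i) / \<gamma> (i+1) * lon r i)\<rparr>)
                     Stot Etot Ftot)))"
  using part1[OF assms] part2[OF assms] part3[OF assms] by (intro conjI)

end
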